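(* Let $N\ge 1$ be an integer and let $a(1),a(2),\dots$ be a sequence of real numbers such that for all integers $n\ge N$, $$a(2n)\le a(n)+a(n)\quad\text{and}\quad a(2n+1)\le a(n)+a(n+1).$$ For $n\ge 1$ let $q(n):=\max\left\{\frac{a(j)}{j}: n\le j\le 2n\right\}$. Then $q(n)\ge q(n+1)$ for all $n\ge N$. *)

theory Defs
  imports Complex_Main
begin

definition qmax :: "(nat \<Rightarrow> real) \<Rightarrow> nat \<Rightarrow> real" where
  "qmax a n = Max {a j / real j | j. n \<le> j \<and> j \<le> 2 * n}"

end

theory Submission
  imports Defs
begin

lemma qmax_alt: "qmax a n = Max ((\<lambda>j. a j / real j) ` {n..2*n})"
  unfolding qmax_def by (rule arg_cong[where f=Max]) auto

lemma qmax_ge: "n \<le> j \<Longrightarrow> j \<le> 2*n \<Longrightarrow> a j / real j \<le> qmax a n"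
  unfolding qmax_alt by (rule Max_ge) auto

theorem lemma3p3:
  fixes a :: "nat \<Rightarrow> real" and N :: nat
  assumes "N \<ge> 1"
    and "\<And>n. n \<ge> N \<Longrightarrow> a (2 * n) \<le> a n + a n"
    and "\<And>n. n \<ge> N \<Longrightarrow> a (2 * n + 1) \<le> a n + a (n + 1)"
  shows "\<forall>n\<ge>N. qmax a n \<ge> qmax a (n + 1)"
proof (intro allI impI)
  fix n assume n: "n \<ge> N"
  hence n1: "n \<ge> 1" using assms(1) by simp
  define Q where "Q = qmax a n"
  have qn: "a n \<le> real n * Q"
    using qmax_ge[of n n a] n1 unfolding Q_def by (simp add: divide_le_eq mult.commute)
  have qn1: "a (n+1) \<le> real (n+1) * Q"
    using qmax_ge[of n "n+1" a] n1 unfolding Q_def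
    by (simp add: divide_le_eq mult.commute del: of_nat_Suc)
  have "a j / real j \<le> Q" if j: "n+1 \<le> j" "j \<le> 2*(n+1)" for j
  proof -
    consider "j \<le> 2*n" | "j = 2*n+1" | "j = 2*n+2" using j by (cases "j \<le> 2*n"; cases "j = 2*n+1"; auto)
    then show ?thesis
    proof cases
      case 1 then show ?thesis using qmax_ge[of n j a] j unfolding Q_def by simp
    next
      case 2
      have "a j \<le> a n + a (n+1)" using assms(3)[OF n] 2 by simp
      also have "\<dots> \<le> real j * Q" using qn qn1 2 by (simp add: algebra_simps)
      finally show ?thesis using 2 by (simp add: divide_le_eq mult.commute)
    next
      case 3
      have "a j \<le> 2 * a (n+1)" using assms(2)[of "n+1"] n 3 by (simp add: algebra_simps)
      also have "\<dots> \<le> real j * Q" using qn1 3 by (simp add: algebra_simps)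
      finally show ?thesis using 3 by (simp add: divide_le_eq mult.commute)
    qed
  qed
  then show "qmax a (n+1) \<le> qmax a n"
    unfolding qmax_alt[of a "n+1"] Q_def[symmetric]
    by (subst Max_le_iff) auto
qed

end
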